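(* Let $\Gamma$ be a finite marked graph with vertex set $V(\Gamma)=V_1\sqcup V_2$, and let $\Gamma_1,\Gamma_2$ be the induced subgraphs on $V_1,V_2$. Assume $h_1(\Gamma)=h_1(\Gamma_1)+h_1(\Gamma_2)$, where $h_1$ denotes the rank of the first homology group of a graph (viewed as a $1$-dimensional complex). Then $$\det\Gamma=\det\Gamma_1\cdot\det\Gamma_2+\sum_{k\ge1}\ \sum_{\{(u_1,v_1),\dots,(u_k,v_k)\}}(-1)^k\det(\Gamma_1-u_1-\dots-u_k)\cdot\det(\Gamma_2-v_1-\dots-v_k),$$ where the inner sum runs over all sets of $k$ pairwise vertex-disjoint edges $(u_i,v_i)$ of $\Gamma$ with $u_i\in V_1$, $v_i\in V_2$.
   Context: A marked graph is a finite graph without loops (multiple edges allowed) in which each vertex $v$ carries a real number $n_v$ (its mark). Its determinant $\det\Gamma$ is the determinant of the $V\times V$ matrix $M$ with $M_{vv}=n_v$ and $M_{uv}=-(\text{number of edges between }u\text{ and }v)$ for $u\ne v$. The determinant of the empty graph is $1$. For vertices $u_1,\dots,u_k$, $\Gamma-u_1-\dots-u_k$ denotes the induced subgraph on the remaining vertices. *)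

theory Defs
  imports Complex_Main "HOL-Combinatorics.Permutations"
begin

text \<open>A finite marked multigraph without loops: vertex set V (type 'a), edge set E
  (type 'e, so parallel edges are distinct elements), each edge e has a 2-element set of
  endpoints ends e, and each vertex v has a real mark n v.\<close>

definition marked_graph :: "'a set \<Rightarrow> 'e set \<Rightarrow> ('e \<Rightarrow> 'a set) \<Rightarrow> bool" where
  "marked_graph V E ends \<longleftrightarrow> finite V \<and> finite E \<and>
     (\<forall>e\<in>E. ends e \<subseteq> V \<and> card (ends e) = 2)"

definition ind_edges :: "'e set \<Rightarrow> ('e \<Rightarrow> 'a set) \<Rightarrow> 'a set \<Rightarrow> 'e set" where
  "ind_edges E ends S = {e\<in>E. ends e \<subseteq> S}"

definition n_edges :: "'e set \<Rightarrow> ('e \<Rightarrow> 'a set) \<Rightarrow> 'a \<Rightarrow> 'a \<Rightarrow> nat" where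
  "n_edges E ends u v = card {e\<in>E. ends e = {u, v}}"

definition mg_matrix :: "('a \<Rightarrow> real) \<Rightarrow> 'e set \<Rightarrow> ('e \<Rightarrow> 'a set) \<Rightarrow> 'a \<Rightarrow> 'a \<Rightarrow> real" where
  "mg_matrix n E ends u v = (if u = v then n v else - real (n_edges E ends u v))"

text \<open>Determinant of the induced marked subgraph on vertex set S (Leibniz formula for the
  S x S matrix M); equals 1 for S empty.\<close>
definition mg_det :: "('a \<Rightarrow> real) \<Rightarrow> 'e set \<Rightarrow> ('e \<Rightarrow> 'a set) \<Rightarrow> 'a set \<Rightarrow> real" where
  "mg_det n E ends S =
     (\<Sum>p\<in>{p. p permutes S}. of_int (sign p) * (\<Prod>i\<in>S. mg_matrix n E ends i (p i)))"

definition ind_adj :: "'e set \<Rightarrow> ('e \<Rightarrow> 'a set) \<Rightarrow> 'a set \<Rightarrow> ('a \<times> 'a) set" where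
  "ind_adj E ends S = {(u, v). u \<in> S \<and> v \<in> S \<and> (\<exists>e\<in>ind_edges E ends S. ends e = {u, v})}"

definition n_components :: "'e set \<Rightarrow> ('e \<Rightarrow> 'a set) \<Rightarrow> 'a set \<Rightarrow> nat" where
  "n_components E ends S = card (S // ((ind_adj E ends S)\<^sup>*))"

definition h1 :: "'e set \<Rightarrow> ('e \<Rightarrow> 'a set) \<Rightarrow> 'a set \<Rightarrow> int" where
  "h1 E ends S = int (card (ind_edges E ends S)) - int (card S) + int (n_components E ends S)"

definition cross_matchings :: "'e set \<Rightarrow> ('e \<Rightarrow> 'a set) \<Rightarrow> 'a set \<Rightarrow> 'a set \<Rightarrow> 'e set set" where
  "cross_matchings E ends V1 V2 =
     {F. F \<subseteq> E \<and> F \<noteq> {} \<and>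
         (\<forall>e\<in>F. \<exists>u v. u \<in> V1 \<and> v \<in> V2 \<and> ends e = {u, v}) \<and>
         (\<forall>e\<in>F. \<forall>f\<in>F. e \<noteq> f \<longrightarrow> ends e \<inter> ends f = {})}"

end

theory Submission
  imports Defs
begin


definition adjr :: "('e \<Rightarrow> 'a set) \<Rightarrow> 'e set \<Rightarrow> ('a \<times> 'a) set" where
  "adjr ends Ed = {(u, v). \<exists>e\<in>Ed. ends e = {u, v}}"

definition ncomp :: "('e \<Rightarrow> 'a set) \<Rightarrow> 'a set \<Rightarrow> 'e set \<Rightarrow> nat" where
  "ncomp ends S Ed = card (S // ((adjr ends Ed)\<^sup>*))"

lemma sym_adjr: "sym (adjr ends Ed)"
  unfolding adjr_def sym_def by (auto simp: insert_commute)

lemma equiv_adjr: "equiv UNIV ((adjr ends Ed)\<^sup>*)"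
  unfolding equiv_def using sym_adjr[THEN sym_rtrancl]
  by (auto simp: refl_rtrancl trans_rtrancl)

lemma ind_adj_eq: "ind_adj E ends S = adjr ends (ind_edges E ends S)"
  unfolding ind_adj_def adjr_def ind_edges_def by auto

lemma n_components_eq: "n_components E ends S = ncomp ends S (ind_edges E ends S)"
  unfolding n_components_def ncomp_def ind_adj_eq ..

lemma adjr_Un: "adjr ends (A \<union> B) = adjr ends A \<union> adjr ends B"
  unfolding adjr_def by auto

lemma adjr_insert: "ends e = {a, b} \<Longrightarrow> adjr ends (insert e Ed) = adjr ends Ed \<union> {(a,b),(b,a)}"
  unfolding adjr_def by (auto simp: doubleton_eq_iff)

lemma rtrancl_closed:
  assumes "(x, y) \<in> R\<^sup>*" "R \<subseteq> S \<times> S" "x \<in> S" shows "y \<in> S"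
  using assms by (induction rule: rtrancl_induct) auto

lemma adjr_sub: "(\<forall>e\<in>Ed. ends e \<subseteq> S) \<Longrightarrow> adjr ends Ed \<subseteq> S \<times> S"
  unfolding adjr_def by auto

lemma finite_quot: "finite S \<Longrightarrow> finite (S // r)"
  unfolding quotient_def by auto

lemma comp_base:
  assumes fin: "finite S1" "finite S2" and disj: "S1 \<inter> S2 = {}"
    and e1: "\<forall>e\<in>Ed1. ends e \<subseteq> S1" and e2: "\<forall>e\<in>Ed2. ends e \<subseteq> S2"
  shows "ncomp ends (S1 \<union> S2) (Ed1 \<union> Ed2) = ncomp ends S1 Ed1 + ncomp ends S2 Ed2"
proof -
  let ?R1 = "adjr ends Ed1" and ?R2 = "adjr ends Ed2"
  let ?R = "adjr ends (Ed1 \<union> Ed2)"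
  have R: "?R = ?R1 \<union> ?R2" by (rule adjr_Un)
  have s1: "?R1 \<subseteq> S1 \<times> S1" and s2: "?R2 \<subseteq> S2 \<times> S2" using adjr_sub e1 e2 by auto
  have c1: "?R\<^sup>* `` {x} = ?R1\<^sup>* `` {x}" if "x \<in> S1" for x
  proof -
    have "(x, y) \<in> ?R1\<^sup>*" if "(x, y) \<in> ?R\<^sup>*" for y
      using that
    proof (induction rule: rtrancl_induct)
      case (step y z)
      then have "y \<in> S1" using rtrancl_closed[OF step(3) s1 \<open>x \<in> S1\<close>] by simp
      then have "(y, z) \<in> ?R1" using step(2) R s2 disj by auto
      then show ?case using step(3) by simp
    qed simp
    moreover have "?R1\<^sup>* \<subseteq> ?R\<^sup>*" using R by (simp add: rtrancl_mono)
    ultimately show ?thesis by auto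
  qed
  have c2: "?R\<^sup>* `` {x} = ?R2\<^sup>* `` {x}" if "x \<in> S2" for x
  proof -
    have "(x, y) \<in> ?R2\<^sup>*" if "(x, y) \<in> ?R\<^sup>*" for y
      using that
    proof (induction rule: rtrancl_induct)
      case (step y z)
      then have "y \<in> S2" using rtrancl_closed[OF step(3) s2 \<open>x \<in> S2\<close>] by simp
      then have "(y, z) \<in> ?R2" using step(2) R s1 disj by auto
      then show ?case using step(3) by simp
    qed simp
    moreover have "?R2\<^sup>* \<subseteq> ?R\<^sup>*" using R by (simp add: rtrancl_mono)
    ultimately show ?thesis by auto
  qed
  have q: "(S1 \<union> S2) // ?R\<^sup>* = S1 // ?R1\<^sup>* \<union> S2 // ?R2\<^sup>*"
    unfolding quotient_def using c1 c2 by auto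
  have d: "S1 // ?R1\<^sup>* \<inter> S2 // ?R2\<^sup>* = {}"
  proof -
    have "X \<subseteq> S1" "X \<noteq> {}" if "X \<in> S1 // ?R1\<^sup>*" for X
      using that rtrancl_closed[OF _ s1] unfolding quotient_def by auto
    moreover have "X \<subseteq> S2" if "X \<in> S2 // ?R2\<^sup>*" for X
      using that rtrancl_closed[OF _ s2] unfolding quotient_def by auto
    ultimately show ?thesis using disj by blast
  qed
  show ?thesis unfolding ncomp_def q
    by (rule card_Un_disjoint) (use fin finite_quot d in auto)
qed

lemma comp_insert_eq:
  assumes "ends e = {a, b}" "(a, b) \<in> (adjr ends Ed)\<^sup>*"
  shows "ncomp ends S (insert e Ed) = ncomp ends S Ed"
proof -
  let ?R = "adjr ends Ed"
  have s: "(b, a) \<in> ?R\<^sup>*" using assms(2) sym_adjr[of ends Ed, THEN sym_rtrancl] by (auto simp: sym_def)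
  have "(adjr ends (insert e Ed))\<^sup>* = ?R\<^sup>*"
  proof
    show "(adjr ends (insert e Ed))\<^sup>* \<subseteq> ?R\<^sup>*"
      unfolding adjr_insert[of ends e a b Ed, OF assms(1)]
      by (metis Un_least empty_subsetI insert_subset r_into_rtrancl rtrancl_subset_rtrancl assms(2) s subsetI)
    show "?R\<^sup>* \<subseteq> (adjr ends (insert e Ed))\<^sup>*"
      unfolding adjr_insert[of ends e a b Ed, OF assms(1)] by (rule rtrancl_mono) auto
  qed
  then show ?thesis unfolding ncomp_def by simp
qed

lemma comp_insert_ge:
  assumes fin: "finite S" and e: "ends e = {a, b}" "a \<in> S" "b \<in> S"
  shows "ncomp ends S Ed \<le> ncomp ends S (insert e Ed) + 1"
proof -
  let ?R = "(adjr ends Ed)\<^sup>*" and ?R' = "(adjr ends (insert e Ed))\<^sup>*"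
  have eq: "equiv UNIV ?R" by (rule equiv_adjr)
  have sR: "(x, y) \<in> ?R \<Longrightarrow> (y, x) \<in> ?R" for x y using eq by (auto simp: equiv_def sym_def)
  have sub: "?R \<subseteq> ?R'" by (rule rtrancl_mono) (auto simp: adjr_def)
  define C where "C = {z. (a, z) \<in> ?R \<or> (b, z) \<in> ?R}"
  have char: "(x, y) \<in> ?R \<or> (x \<in> C \<and> y \<in> C)" if "(x, y) \<in> ?R'" for x y
    using that
  proof (induction rule: rtrancl_induct)
    case base then show ?case by simp
  next
    case (step y z)
    from step(2) have "(y, z) \<in> adjr ends Ed \<or> (y = a \<and> z = b) \<or> (y = b \<and> z = a)"
      unfolding adjr_insert[of ends e a b Ed, OF e(1)] by auto
    then show ?case
    proof
      assume yz: "(y, z) \<in> adjr ends Ed"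
      from step(3) show ?case
      proof
        assume "(x, y) \<in> ?R" then show ?thesis using yz by (meson rtrancl.rtrancl_into_rtrancl)
      next
        assume "x \<in> C \<and> y \<in> C" then show ?thesis using yz unfolding C_def
          by (auto intro: rtrancl.rtrancl_into_rtrancl)
      qed
    next
      assume yz: "y = a \<and> z = b \<or> y = b \<and> z = a"
      then have zC: "z \<in> C" "y \<in> C" unfolding C_def by auto
      from step(3) show ?case
      proof
        assume "(x, y) \<in> ?R" then have "(y, x) \<in> ?R" by (rule sR)
        then have "x \<in> C" using yz unfolding C_def by auto
        then show ?thesis using zC by auto
      next
        assume "x \<in> C \<and> y \<in> C" then show ?thesis using zC by auto
      qed
    qed
  qed
  define h where "h X = ?R' `` X" for X
  have hx: "h (?R `` {x}) = ?R' `` {x}" for x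
  proof -
    have "?R' `` (?R `` {x}) = ?R' `` {x}"
    proof
      show "?R' `` (?R `` {x}) \<subseteq> ?R' `` {x}" using sub
        by (auto intro: rtrancl_trans)
      show "?R' `` {x} \<subseteq> ?R' `` (?R `` {x})" by auto
    qed
    then show ?thesis unfolding h_def .
  qed
  let ?Q = "S // ?R" and ?Xb = "?R `` {b}"
  have img: "h ` ?Q = S // ?R'" unfolding quotient_def using hx by auto
  have inj: "inj_on h (?Q - {?Xb})"
  proof (rule inj_onI)
    fix X Y assume X: "X \<in> ?Q - {?Xb}" and Y: "Y \<in> ?Q - {?Xb}" and hXY: "h X = h Y"
    obtain x where x: "x \<in> S" "X = ?R `` {x}" using X unfolding quotient_def by auto
    obtain y where y: "y \<in> S" "Y = ?R `` {y}" using Y unfolding quotient_def by auto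
    have "?R' `` {x} = ?R' `` {y}" using hXY x y hx by simp
    then have "(x, y) \<in> ?R'" by auto
    then have "(x, y) \<in> ?R \<or> (x \<in> C \<and> y \<in> C)" by (rule char)
    then show "X = Y"
    proof
      assume "(x, y) \<in> ?R" then have "?R `` {x} = ?R `` {y}" by (rule equiv_class_eq[OF eq])
      then show ?thesis using x y by simp
    next
      assume xy: "x \<in> C \<and> y \<in> C"
      have nb: "(b, x) \<notin> ?R" "(b, y) \<notin> ?R"
      proof
        assume "(b, x) \<in> ?R" then have "?R `` {b} = ?R `` {x}" by (rule equiv_class_eq[OF eq])
        then show False using X x by simp
      next
        show "(b, y) \<notin> ?R"
        proof
          assume "(b, y) \<in> ?R" then have "?R `` {b} = ?R `` {y}" by (rule equiv_class_eq[OF eq])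
          then show False using Y y by simp
        qed
      qed
      then have ax0: "(a, x) \<in> ?R" and ay0: "(a, y) \<in> ?R" using xy unfolding C_def by auto
      have ax: "?R `` {a} = ?R `` {x}" using ax0 by (rule equiv_class_eq[OF eq])
      have ay: "?R `` {a} = ?R `` {y}" using ay0 by (rule equiv_class_eq[OF eq])
      show ?thesis using x y ax ay by simp
    qed
  qed
  have fQ: "finite ?Q" using fin by (rule finite_quot)
  have "card ?Q \<le> card (?Q - {?Xb}) + 1" using fQ card_Suc_Diff1[of ?Q ?Xb] by (cases "?Xb \<in> ?Q") auto
  also have "card (?Q - {?Xb}) = card (h ` (?Q - {?Xb}))" using inj by (simp add: card_image)
  also have "\<dots> \<le> card (S // ?R')"
  proof (rule card_mono)
    show "finite (S // ?R')" using fin by (rule finite_quot)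
    have "h ` (?Q - {?Xb}) \<subseteq> h ` ?Q" by (rule image_mono) blast
    then show "h ` (?Q - {?Xb}) \<subseteq> S // ?R'" using img by simp
  qed
  finally show ?thesis unfolding ncomp_def by simp
qed

lemma comp_add_edges:
  assumes "finite S" "finite A" "\<forall>e\<in>A. \<exists>a b. ends e = {a, b} \<and> a \<in> S \<and> b \<in> S"
  shows "ncomp ends S Ed0 \<le> ncomp ends S (Ed0 \<union> A) + card A"
  using assms(2,3)
proof (induction A rule: finite_induct)
  case empty then show ?case by simp
next
  case (insert e A)
  obtain a b where ab: "ends e = {a, b}" "a \<in> S" "b \<in> S" using insert(4) by auto
  have "ncomp ends S (Ed0 \<union> A) \<le> ncomp ends S (insert e (Ed0 \<union> A)) + 1"
    by (rule comp_insert_ge[of S ends e a b, OF assms(1) ab])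
  then show ?case using insert by simp
qed

lemma no_red:
  assumes mg: "marked_graph V E ends"
    and VV: "V = V1 \<union> V2" and disj: "V1 \<inter> V2 = {}"
    and h: "h1 E ends V = h1 E ends V1 + h1 E ends V2"
    and e: "e \<in> E" "u \<in> V1" "v \<in> V2" "ends e = {u, v}"
  shows "(u, v) \<notin> (adjr ends (E - {e}))\<^sup>*"
proof
  assume conn: "(u, v) \<in> (adjr ends (E - {e}))\<^sup>*"
  define E1 where "E1 = ind_edges E ends V1"
  define E2 where "E2 = ind_edges E ends V2"
  define E12 where "E12 = E - (E1 \<union> E2)"
  have finV: "finite V" and finE: "finite E" and ends: "\<forall>e\<in>E. ends e \<subseteq> V \<and> card (ends e) = 2"
    using mg unfolding marked_graph_def by auto
  have fin1: "finite V1" "finite V2" using finV VV by auto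
  have EV: "ind_edges E ends V = E" using ends unfolding ind_edges_def by auto
  have sub12: "E1 \<subseteq> E" "E2 \<subseteq> E" unfolding E1_def E2_def ind_edges_def by auto
  have d12: "E1 \<inter> E2 = {}"
  proof (rule ccontr)
    assume "E1 \<inter> E2 \<noteq> {}"
    then obtain f where f: "f \<in> E" "ends f \<subseteq> V1" "ends f \<subseteq> V2"
      unfolding E1_def E2_def ind_edges_def by auto
    then have "ends f = {}" using disj by auto
    moreover have "card (ends f) = 2" using ends f(1) by auto
    ultimately show False by simp
  qed
  have eE12: "e \<in> E12" using e disj unfolding E12_def E1_def E2_def ind_edges_def by auto
  have fE12: "finite E12" using finE unfolding E12_def by simp
  have cardE: "card E = card E1 + card E2 + card E12"
  proof -
    have f1: "finite E1" "finite E2" using finE sub12 finite_subset by blast+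
    have un: "E = (E1 \<union> E2) \<union> E12" using sub12 unfolding E12_def by auto
    have dis: "(E1 \<union> E2) \<inter> E12 = {}" unfolding E12_def by auto
    have "card ((E1 \<union> E2) \<union> E12) = card (E1 \<union> E2) + card E12"
      using f1 fE12 dis by (simp add: card_Un_disjoint)
    moreover have "card (E1 \<union> E2) = card E1 + card E2"
      using f1 d12 by (simp add: card_Un_disjoint)
    ultimately show ?thesis using un by simp
  qed
  have cardV: "card V = card V1 + card V2" using VV disj fin1 by (simp add: card_Un_disjoint)
  have base: "ncomp ends V (E1 \<union> E2) = ncomp ends V1 E1 + ncomp ends V2 E2"
    unfolding VV by (rule comp_base) (use fin1 disj in \<open>auto simp: E1_def E2_def ind_edges_def\<close>)
  have eq1: "ncomp ends V E = ncomp ends V (E - {e})"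
  proof -
    have "E = insert e (E - {e})" using e by auto
    then show ?thesis using comp_insert_eq[of ends e u v "E - {e}" V, OF e(4) conn] by simp
  qed
  have Erest: "E - {e} = (E1 \<union> E2) \<union> (E12 - {e})" using sub12 eE12 unfolding E12_def by auto
  have ge: "ncomp ends V (E1 \<union> E2) \<le> ncomp ends V (E - {e}) + card (E12 - {e})"
    unfolding Erest
  proof (rule comp_add_edges[OF finV])
    show "finite (E12 - {e})" using finE unfolding E12_def by auto
    show "\<forall>e\<in>E12 - {e}. \<exists>a b. ends e = {a, b} \<and> a \<in> V \<and> b \<in> V"
    proof
      fix f assume "f \<in> E12 - {e}"
      then have "f \<in> E" unfolding E12_def by auto
      then have "ends f \<subseteq> V" "card (ends f) = 2" using ends by auto
      then show "\<exists>a b. ends f = {a, b} \<and> a \<in> V \<and> b \<in> V" by (auto simp: card_2_iff)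
    qed
  qed
  have c12: "card (E12 - {e}) + 1 = card E12"
    using card_Suc_Diff1[OF fE12 eE12] by simp
  have "h1 E ends V = int (card E) - int (card V) + int (ncomp ends V E)"
    unfolding h1_def EV n_components_eq ..
  moreover have "h1 E ends V1 = int (card E1) - int (card V1) + int (ncomp ends V1 E1)"
    unfolding h1_def E1_def n_components_eq ..
  moreover have "h1 E ends V2 = int (card E2) - int (card V2) + int (ncomp ends V2 E2)"
    unfolding h1_def E2_def n_components_eq ..
  ultimately show False using h cardE cardV base eq1 ge c12 by linarith
qed



lemma orbit_conn:
  assumes p: "p permutes V" "finite V" and st: "\<And>x. x \<noteq> i \<Longrightarrow> (x, p x) \<in> R\<^sup>*"
  shows "(p i, i) \<in> R\<^sup>*"
proof -
  have "permutation p" using p permutation_permutes by blast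
  then obtain N where N: "N > 0" "(p ^^ N) i = i" by (rule permutation_self)
  then obtain m where "N = Suc m" by (cases N) auto
  then have "(p ^^ Suc m) i = i" using N by simp
  then have ex: "(p ^^ m) (p i) = i" by (simp only: funpow_Suc_right comp_apply)
  have P: "(\<forall>m<k. (p ^^ m) (p i) \<noteq> i) \<longrightarrow> (p i, (p ^^ k) (p i)) \<in> R\<^sup>*" for k
  proof (induction k)
    case 0 then show ?case by simp
  next
    case (Suc k)
    show ?case
    proof
      assume h: "\<forall>m<Suc k. (p ^^ m) (p i) \<noteq> i"
      then have "(p i, (p ^^ k) (p i)) \<in> R\<^sup>*" using Suc by auto
      moreover have "((p ^^ k) (p i), p ((p ^^ k) (p i))) \<in> R\<^sup>*" using h st by auto
      ultimately show "(p i, (p ^^ Suc k) (p i)) \<in> R\<^sup>*" by (simp add: rtrancl_trans)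
    qed
  qed
  obtain k where k: "(p ^^ k) (p i) = i" "\<forall>m<k. (p ^^ m) (p i) \<noteq> i"
    using ex exists_least_iff[of "\<lambda>k. (p ^^ k) (p i) = i"] by blast
  then show ?thesis using P[of k] by simp
qed

locale mgs =
  fixes V V1 V2 :: "'a set" and E :: "'e set" and ends :: "'e \<Rightarrow> 'a set" and n :: "'a \<Rightarrow> real"
  assumes mg: "marked_graph V E ends" and VV: "V = V1 \<union> V2" and disj: "V1 \<inter> V2 = {}"
    and nored: "\<And>e u v. e \<in> E \<Longrightarrow> u \<in> V1 \<Longrightarrow> v \<in> V2 \<Longrightarrow> ends e = {u, v} \<Longrightarrow>
                  (u, v) \<notin> (adjr ends (E - {e}))\<^sup>*"
begin

abbreviation M where "M \<equiv> mg_matrix n E ends"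

lemma finV: "finite V" and finE: "finite E" and ends: "\<And>e. e \<in> E \<Longrightarrow> ends e \<subseteq> V \<and> card (ends e) = 2"
  using mg unfolding marked_graph_def by auto

lemma swap: "mgs V V2 V1 E ends"
proof
  show "marked_graph V E ends" by (rule mg)
  show "V = V2 \<union> V1" using VV by auto
  show "V2 \<inter> V1 = {}" using disj by auto
  fix e u v assume "e \<in> E" "u \<in> V2" "v \<in> V1" "ends e = {u, v}"
  then have "(v, u) \<notin> (adjr ends (E - {e}))\<^sup>*" using nored[of e v u] by (auto simp: insert_commute)
  then show "(u, v) \<notin> (adjr ends (E - {e}))\<^sup>*"
    using sym_adjr[of ends "E - {e}", THEN sym_rtrancl] by (auto simp: sym_def)
qed

lemma uniq:
  assumes "e \<in> E" "f \<in> E" "ends e = {u, v}" "ends f = {u, v}" "u \<in> V1" "v \<in> V2"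
  shows "e = f"
proof (rule ccontr)
  assume "e \<noteq> f"
  then have "(u, v) \<in> adjr ends (E - {e})" using assms unfolding adjr_def by auto
  then show False using nored[OF assms(1,5,6,3)] by auto
qed

lemma nedges1:
  assumes "e \<in> E" "ends e = {u, v}" "u \<in> V1" "v \<in> V2"
  shows "n_edges E ends u v = 1" "n_edges E ends v u = 1"
proof -
  have S: "{f \<in> E. ends f = {u, v}} = {e}"
  proof
    show "{f \<in> E. ends f = {u, v}} \<subseteq> {e}"
    proof
      fix f assume "f \<in> {f \<in> E. ends f = {u, v}}"
      then have "f \<in> E" "ends f = {u, v}" by simp_all
      then have "e = f" using uniq[OF assms(1) _ assms(2) _ assms(3,4)] by blast
      then show "f \<in> {e}" by simp
    qed
    show "{e} \<subseteq> {f \<in> E. ends f = {u, v}}" using assms(1,2) by simp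
  qed
  have c: "{v, u} = {u, v}" by (rule insert_commute)
  show "n_edges E ends u v = 1" unfolding n_edges_def S by simp
  show "n_edges E ends v u = 1" unfolding n_edges_def c S by simp
qed

lemma Muv:
  assumes "e \<in> E" "ends e = {u, v}" "u \<in> V1" "v \<in> V2"
  shows "M u v = -1" "M v u = -1"
proof -
  have uv: "u \<noteq> v" "v \<noteq> u" using assms(3,4) disj by auto
  show "M u v = -1" using nedges1(1)[OF assms] uv unfolding mg_matrix_def by simp
  show "M v u = -1" using nedges1(2)[OF assms] uv unfolding mg_matrix_def by simp
qed

lemma nz_edge:
  assumes p: "p permutes V" and nz: "(\<Prod>i\<in>V. M i (p i)) \<noteq> 0" and pi: "p i \<noteq> i"
  shows "\<exists>e\<in>E. ends e = {i, p i}"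
proof -
  have "i \<in> V" using p pi permutes_not_in by metis
  then have "M i (p i) \<noteq> 0" using nz finV by auto
  then have "n_edges E ends i (p i) \<noteq> 0" using pi unfolding mg_matrix_def by auto
  then have c: "card {e \<in> E. ends e = {i, p i}} \<noteq> 0" unfolding n_edges_def .
  have "{e \<in> E. ends e = {i, p i}} \<noteq> {}"
  proof
    assume h: "{e \<in> E. ends e = {i, p i}} = {}"
    have "card {e \<in> E. ends e = {i, p i}} = 0" by (simp only: h card.empty)
    then show False using c by simp
  qed
  then show ?thesis by blast
qed

lemma backa:
  assumes p: "p permutes V" and nz: "(\<Prod>i\<in>V. M i (p i)) \<noteq> 0" and i: "i \<in> V1" "p i \<in> V2"
  shows "p (p i) = i"
proof (rule ccontr)
  assume npi: "p (p i) \<noteq> i"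
  have ne: "p i \<noteq> i" using i disj by auto
  obtain e where e: "e \<in> E" "ends e = {i, p i}" using nz_edge[OF p nz ne] by auto
  let ?R = "adjr ends (E - {e})"
  have st: "(x, p x) \<in> ?R\<^sup>*" if "x \<noteq> i" for x
  proof (cases "p x = x")
    case True then show ?thesis by simp
  next
    case False
    obtain f where f: "f \<in> E" "ends f = {x, p x}" using nz_edge[OF p nz False] by auto
    have "f \<noteq> e"
    proof
      assume "f = e"
      then have "{x, p x} = {i, p i}" using e f by simp
      then have "x = p i \<and> p x = i" using that by (auto simp: doubleton_eq_iff)
      then show False using npi by metis
    qed
    then have "(x, p x) \<in> ?R" using f unfolding adjr_def by auto
    then show ?thesis by simp
  qed
  have "(p i, i) \<in> ?R\<^sup>*" by (rule orbit_conn[OF p finV st])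
  then have "(i, p i) \<in> ?R\<^sup>*" using sym_adjr[of ends "E - {e}", THEN sym_rtrancl] by (auto simp: sym_def)
  then show False using nored[OF e(1) i e(2)] by simp
qed

lemma back2:
  assumes p: "p permutes V" and nz: "(\<Prod>i\<in>V. M i (p i)) \<noteq> 0" and i: "i \<in> V2" "p i \<in> V1"
  shows "p (p i) = i"
  using mgs.backa[OF swap p nz i] .

end


definition partner :: "('e \<Rightarrow> 'a set) \<Rightarrow> 'e set \<Rightarrow> 'a \<Rightarrow> 'a" where
  "partner ends F x = (THE y. \<exists>e\<in>F. ends e = {x, y})"

definition tau :: "('e \<Rightarrow> 'a set) \<Rightarrow> 'e set \<Rightarrow> 'a \<Rightarrow> 'a" where
  "tau ends F x = (if x \<in> \<Union>(ends ` F) then partner ends F x else x)"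

definition dmatch :: "('e \<Rightarrow> 'a set) \<Rightarrow> 'e set \<Rightarrow> bool" where
  "dmatch ends F \<longleftrightarrow> finite F \<and> (\<forall>e\<in>F. card (ends e) = 2) \<and>
     (\<forall>e\<in>F. \<forall>f\<in>F. e \<noteq> f \<longrightarrow> ends e \<inter> ends f = {})"

lemma partner_eq:
  assumes d: "\<forall>e\<in>F. \<forall>f\<in>F. e \<noteq> f \<longrightarrow> ends e \<inter> ends f = {}" and e: "e \<in> F" "ends e = {x, y}"
  shows "partner ends F x = y"
  unfolding partner_def
proof (rule the_equality)
  show "\<exists>e\<in>F. ends e = {x, y}" using e by auto
  fix y' assume "\<exists>e\<in>F. ends e = {x, y'}"
  then obtain f where f: "f \<in> F" "ends f = {x, y'}" by auto
  then have "e = f" using d e by blast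
  then show "y' = y" using e f by (auto simp: doubleton_eq_iff)
qed

lemma tau_props:
  assumes "dmatch ends F"
  shows "tau ends F permutes \<Union>(ends ` F) \<and> sign (tau ends F) = (-1) ^ card F"
proof -
  have "finite F" and c2: "\<forall>e\<in>F. card (ends e) = 2"
    and d: "\<forall>e\<in>F. \<forall>f\<in>F. e \<noteq> f \<longrightarrow> ends e \<inter> ends f = {}"
    using assms unfolding dmatch_def by auto
  then show ?thesis
  proof (induction F rule: finite_induct)
    case empty
    have t: "tau ends {} = id" unfolding tau_def by (simp add: id_def)
    show ?case unfolding t by (simp add: id_def)
  next
    case (insert e F)
    obtain a b where ab: "ends e = {a, b}" "a \<noteq> b" using insert(4) by (auto simp: card_2_iff)
    have dF: "\<forall>e\<in>F. \<forall>f\<in>F. e \<noteq> f \<longrightarrow> ends e \<inter> ends f = {}" using insert(5) by blast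
    have IH: "tau ends F permutes \<Union>(ends ` F)" "sign (tau ends F) = (-1) ^ card F"
      using insert(3)[OF _ dF] insert(4) by auto
    have abU: "a \<notin> \<Union>(ends ` F)" "b \<notin> \<Union>(ends ` F)" using insert(2,5) ab by fastforce+
    have eq: "tau ends (insert e F) = transpose a b \<circ> tau ends F"
    proof
      fix x
      show "tau ends (insert e F) x = (transpose a b \<circ> tau ends F) x"
      proof (cases "x \<in> \<Union>(ends ` F)")
        case True
        then obtain f where f: "f \<in> F" "x \<in> ends f" by auto
        have "card (ends f) = 2" using insert(4) f(1) by blast
        then obtain a' b' where ab': "ends f = {a', b'}" by (auto simp: card_2_iff)
        then have "ends f = {x, if x = a' then b' else a'}" using f(2) by auto
        then obtain y where y: "ends f = {x, y}" by blast
        have p1: "partner ends F x = y" using partner_eq[OF dF f(1) y] .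
        have p2: "partner ends (insert e F) x = y" using partner_eq[OF insert(5) _ y] f by auto
        have "y \<in> \<Union>(ends ` F)" using f y by auto
        then have "y \<noteq> a" "y \<noteq> b" using abU by auto
        then show ?thesis using True p1 p2 unfolding tau_def by auto
      next
        case False
        show ?thesis
        proof (cases "x = a \<or> x = b")
          case True
          then have "partner ends (insert e F) x = (if x = a then b else a)"
            using partner_eq[OF insert(5), of e a b] partner_eq[OF insert(5), of e b a] ab
            by (auto simp: insert_commute)
          then show ?thesis using True False ab unfolding tau_def by (auto simp: transpose_def)
        next
          case False2: False
          then show ?thesis using False ab unfolding tau_def by (auto simp: transpose_def)
        qed
      qed
    qed
    have U: "\<Union>(ends ` insert e F) = {a, b} \<union> \<Union>(ends ` F)" using ab by auto
    have perm: "tau ends (insert e F) permutes \<Union>(ends ` insert e F)"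
      unfolding eq U
      by (rule permutes_compose[OF permutes_subset[OF IH(1)] permutes_swap_id]) auto
    have fU: "finite (\<Union>(ends ` F))" using insert(1,4) by (auto intro: card_ge_0_finite)
    have "sign (tau ends (insert e F)) = sign (transpose a b) * sign (tau ends F)"
      unfolding eq
      by (rule sign_compose) (use IH(1) fU permutation_permutes in \<open>auto intro: permutation_swap_id\<close>)
    then show ?case using perm IH ab insert(1,2) by (simp add: sign_swap_id)
  qed
qed



context mgs begin

definition "CM' = insert {} (cross_matchings E ends V1 V2)"
definition "UF F = \<Union>(ends ` F)"
definition "build F s1 s2 = s1 \<circ> s2 \<circ> tau ends F"
definition "val p = of_int (sign p) * (\<Prod>i\<in>V. M i (p i))"

lemma cm_props:
  assumes "F \<in> CM'"
  shows "dmatch ends F" "F \<subseteq> E" "\<And>e. e \<in> F \<Longrightarrow> \<exists>u v. u \<in> V1 \<and> v \<in> V2 \<and> ends e = {u, v}"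
    "UF F \<subseteq> V" "\<And>e f. e \<in> F \<Longrightarrow> f \<in> F \<Longrightarrow> e \<noteq> f \<Longrightarrow> ends e \<inter> ends f = {}"
proof -
  have F: "F = {} \<or> F \<in> cross_matchings E ends V1 V2" using assms unfolding CM'_def by auto
  show sub: "F \<subseteq> E" using F unfolding cross_matchings_def by auto
  show cr: "\<And>e. e \<in> F \<Longrightarrow> \<exists>u v. u \<in> V1 \<and> v \<in> V2 \<and> ends e = {u, v}"
    using F unfolding cross_matchings_def by auto
  show dj: "ends e \<inter> ends f = {}" if ef: "e \<in> F" "f \<in> F" "e \<noteq> f" for e f
  proof -
    have "F \<in> cross_matchings E ends V1 V2" using F ef by auto
    then have "\<forall>e\<in>F. \<forall>f\<in>F. e \<noteq> f \<longrightarrow> ends e \<inter> ends f = {}"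
      unfolding cross_matchings_def by simp
    then show ?thesis using ef by blast
  qed
  show "dmatch ends F" unfolding dmatch_def
  proof (intro conjI ballI impI)
    show "finite F" using sub finE by (rule finite_subset)
    fix e assume "e \<in> F"
    then show "card (ends e) = 2" using sub ends by blast
  next
    fix e f assume "e \<in> F" "f \<in> F" "e \<noteq> f"
    then show "ends e \<inter> ends f = {}" by (rule dj)
  qed
  show "UF F \<subseteq> V" unfolding UF_def using sub ends by blast
qed

lemma build_facts:
  assumes F: "F \<in> CM'" and s1: "s1 permutes V1 - UF F" and s2: "s2 permutes V2 - UF F"
  shows "\<And>x. x \<in> UF F \<Longrightarrow> build F s1 s2 x = partner ends F x"
    "\<And>x. x \<in> V1 - UF F \<Longrightarrow> build F s1 s2 x = s1 x"
    "\<And>x. x \<in> V2 - UF F \<Longrightarrow> build F s1 s2 x = s2 x"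
    "build F s1 s2 permutes V"
    "\<And>e u v. e \<in> F \<Longrightarrow> ends e = {u, v} \<Longrightarrow> build F s1 s2 u = v"
proof -
  have tp: "tau ends F permutes UF F" using tau_props[OF cm_props(1)[OF F]] unfolding UF_def by auto
  have dF: "\<forall>e\<in>F. \<forall>f\<in>F. e \<noteq> f \<longrightarrow> ends e \<inter> ends f = {}" using cm_props(5)[OF F] by blast
  show a: "build F s1 s2 x = partner ends F x" if x: "x \<in> UF F" for x
  proof -
    have "tau ends F x \<in> UF F" using tp x by (simp add: permutes_in_image)
    moreover have "tau ends F x = partner ends F x" using x unfolding tau_def UF_def by auto
    ultimately show ?thesis unfolding build_def using s1 s2 permutes_not_in by (metis DiffD2 o_apply)
  qed
  show "build F s1 s2 x = s1 x" if x: "x \<in> V1 - UF F" for x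
  proof -
    have "tau ends F x = x" using x unfolding tau_def UF_def by auto
    moreover have "s2 x = x" using x disj s2 permutes_not_in by fastforce
    ultimately show ?thesis unfolding build_def by simp
  qed
  show "build F s1 s2 x = s2 x" if x: "x \<in> V2 - UF F" for x
  proof -
    have "tau ends F x = x" using x unfolding tau_def UF_def by auto
    moreover have "s2 x \<in> V2 - UF F" using x permutes_in_image[OF s2] by blast
    then have "s1 (s2 x) = s2 x" using disj s1 permutes_not_in by fastforce
    ultimately show ?thesis unfolding build_def by simp
  qed
  show "build F s1 s2 permutes V"
    unfolding build_def
  proof (rule permutes_compose[OF permutes_subset[OF tp] permutes_compose])
    show "UF F \<subseteq> V" by (rule cm_props(4)[OF F])
    show "s2 permutes V" by (rule permutes_subset[OF s2]) (use VV in auto)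
    show "s1 permutes V" by (rule permutes_subset[OF s1]) (use VV in auto)
  qed
  show "build F s1 s2 u = v" if "e \<in> F" "ends e = {u, v}" for e u v
  proof -
    have "u \<in> UF F" using that unfolding UF_def by auto
    then show ?thesis using a partner_eq[OF dF that] by simp
  qed
qed

lemma val_build:
  assumes F: "F \<in> CM'" and s1: "s1 permutes V1 - UF F" and s2: "s2 permutes V2 - UF F"
  shows "val (build F s1 s2) = (-1) ^ card F * (of_int (sign s1) * (\<Prod>i\<in>V1 - UF F. M i (s1 i)))
           * (of_int (sign s2) * (\<Prod>i\<in>V2 - UF F. M i (s2 i)))"
proof -
  let ?p = "build F s1 s2" and ?U = "UF F"
  note bf = build_facts[OF F s1 s2]
  have dm: "dmatch ends F" by (rule cm_props(1)[OF F])
  have finF: "finite F" using dm unfolding dmatch_def by auto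
  have tp: "tau ends F permutes ?U" "sign (tau ends F) = (-1) ^ card F"
    using tau_props[OF dm] unfolding UF_def by auto
  have UV: "?U \<subseteq> V" by (rule cm_props(4)[OF F])
  have finU: "finite ?U" using UV finV by (rule finite_subset)
  have fin1: "finite (V1 - ?U)" "finite (V2 - ?U)" using finV VV by auto
  have sg: "sign ?p = sign s1 * sign s2 * (-1) ^ card F"
  proof -
    have ps: "permutation s1" "permutation s2" "permutation (tau ends F)"
      using s1 s2 tp(1) fin1 finU permutation_permutes by blast+
    have "sign ?p = sign s1 * sign (s2 \<circ> tau ends F)" unfolding build_def
      by (simp add: o_assoc[symmetric] sign_compose ps permutation_compose)
    also have "\<dots> = sign s1 * (sign s2 * sign (tau ends F))" using ps by (simp add: sign_compose)
    finally show ?thesis using tp(2) by simp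
  qed
  have Vsplit: "V = ((V1 - ?U) \<union> (V2 - ?U)) \<union> ?U" using VV UV by auto
  have "(\<Prod>i\<in>V. M i (?p i)) = (\<Prod>i\<in>(V1 - ?U) \<union> (V2 - ?U). M i (?p i)) * (\<Prod>i\<in>?U. M i (?p i))"
    by (subst Vsplit, rule prod.union_disjoint) (use fin1 finU in auto)
  also have "(\<Prod>i\<in>(V1 - ?U) \<union> (V2 - ?U). M i (?p i)) =
      (\<Prod>i\<in>V1 - ?U. M i (?p i)) * (\<Prod>i\<in>V2 - ?U. M i (?p i))"
    by (rule prod.union_disjoint) (use fin1 disj in auto)
  also have "(\<Prod>i\<in>V1 - ?U. M i (?p i)) = (\<Prod>i\<in>V1 - ?U. M i (s1 i))"
    by (rule prod.cong) (auto simp: bf(2))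
  also have "(\<Prod>i\<in>V2 - ?U. M i (?p i)) = (\<Prod>i\<in>V2 - ?U. M i (s2 i))"
    by (rule prod.cong) (auto simp: bf(3))
  also have "(\<Prod>i\<in>?U. M i (?p i)) = 1"
  proof -
    have "(\<Prod>i\<in>?U. M i (?p i)) = (\<Prod>e\<in>F. \<Prod>i\<in>ends e. M i (?p i))"
      unfolding UF_def
    proof (rule prod.UNION_disjoint)
      show "finite F" by (rule finF)
      show "\<forall>e\<in>F. finite (ends e)" using cm_props(3)[OF F] by fastforce
      show "\<forall>e\<in>F. \<forall>f\<in>F. e \<noteq> f \<longrightarrow> ends e \<inter> ends f = {}" using cm_props(5)[OF F] by blast
    qed
    also have "\<dots> = (\<Prod>e\<in>F. 1)"
    proof (rule prod.cong)
      fix e assume e: "e \<in> F"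
      then obtain u v where uv: "u \<in> V1" "v \<in> V2" "ends e = {u, v}" using cm_props(3)[OF F] by blast
      have "u \<noteq> v" using uv disj by auto
      have eE: "e \<in> E" using e cm_props(2)[OF F] by auto
      have "?p u = v" "?p v = u" using bf(5)[OF e uv(3)] bf(5)[OF e, of v u] uv(3)
        by (auto simp: insert_commute)
      then show "(\<Prod>i\<in>ends e. M i (?p i)) = 1" using Muv[OF eE uv(3,1,2)] \<open>u \<noteq> v\<close> uv(3) by simp
    qed simp
    finally show ?thesis by simp
  qed
  finally show ?thesis unfolding val_def sg by (simp add: algebra_simps)
qed

end


lemma restrict_permutes:
  assumes p: "p permutes V" and fin: "finite A" and inv: "\<And>x. x \<in> A \<Longrightarrow> p x \<in> A"
  shows "(\<lambda>x. if x \<in> A then p x else x) permutes A"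
proof (rule bij_imp_permutes)
  have "inj_on p A" using permutes_inj[OF p] by (auto intro: inj_on_subset)
  moreover have "p ` A = A" using endo_inj_surj[OF fin _ \<open>inj_on p A\<close>] inv by auto
  ultimately have "bij_betw p A A" unfolding bij_betw_def by auto
  then show "bij_betw (\<lambda>x. if x \<in> A then p x else x) A A"
    by (rule bij_betw_cong[THEN iffD1, rotated]) auto
qed auto

context mgs begin

definition "Fp p = {e \<in> E. \<exists>i\<in>V1. p i \<in> V2 \<and> ends e = {i, p i}}"

lemma build_inv:
  assumes F: "F \<in> CM'" and s1: "s1 permutes V1 - UF F" and s2: "s2 permutes V2 - UF F"
  shows "F = Fp (build F s1 s2)"
    "s1 = (\<lambda>x. if x \<in> V1 - UF F then build F s1 s2 x else x)"
    "s2 = (\<lambda>x. if x \<in> V2 - UF F then build F s1 s2 x else x)"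
proof -
  let ?p = "build F s1 s2"
  note bf = build_facts[OF F s1 s2]
  show "F = Fp ?p"
  proof
    show "F \<subseteq> Fp ?p"
    proof
      fix e assume e: "e \<in> F"
      then obtain u v where uv: "u \<in> V1" "v \<in> V2" "ends e = {u, v}" using cm_props(3)[OF F] by blast
      have "?p u = v" using bf(5)[OF e uv(3)] .
      then show "e \<in> Fp ?p" unfolding Fp_def using e cm_props(2)[OF F] uv by auto
    qed
    show "Fp ?p \<subseteq> F"
    proof
      fix e assume "e \<in> Fp ?p"
      then obtain i where i: "e \<in> E" "i \<in> V1" "?p i \<in> V2" "ends e = {i, ?p i}" unfolding Fp_def by auto
      have iU: "i \<in> UF F"
      proof (rule ccontr)
        assume "i \<notin> UF F"
        then have "?p i = s1 i" "s1 i \<in> V1 - UF F"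
          using bf(2) i(2) permutes_in_image[OF s1, of i] by auto
        then show False using i(3) disj by auto
      qed
      then obtain f where f: "f \<in> F" "i \<in> ends f" unfolding UF_def by auto
      then obtain u v where uv: "u \<in> V1" "v \<in> V2" "ends f = {u, v}" using cm_props(3)[OF F] by blast
      have "i = u" using f(2) uv i(2) disj by auto
      then have "?p i = v" using bf(5)[OF f(1) uv(3)] by simp
      then have "ends e = ends f" using i(4) uv(3) \<open>i = u\<close> by simp
      then have "e = f" using uniq[OF i(1), of f u v] cm_props(2)[OF F] f uv i(4) by auto
      then show "e \<in> F" using f by simp
    qed
  qed
  show "s1 = (\<lambda>x. if x \<in> V1 - UF F then ?p x else x)"
    using bf(2) s1 permutes_not_in by fastforce
  show "s2 = (\<lambda>x. if x \<in> V2 - UF F then ?p x else x)"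
    using bf(3) s2 permutes_not_in by fastforce
qed

lemma stay:
  assumes p: "p permutes V" and nz: "(\<Prod>i\<in>V. M i (p i)) \<noteq> 0" and x: "x \<in> V1" "p x \<notin> V2"
  shows "p x \<in> V1" "p (p x) \<notin> V2"
proof -
  show px: "p x \<in> V1" using x VV p permutes_in_image by fastforce
  show "p (p x) \<notin> V2"
  proof
    assume "p (p x) \<in> V2"
    then have "p (p (p x)) = p x" using backa[OF p nz px] by simp
    then have "p (p x) = x" using permutes_inj[OF p] by (simp add: inj_eq)
    then show False using \<open>p (p x) \<in> V2\<close> x disj by auto
  qed
qed

lemma surj:
  assumes p: "p permutes V" and nz: "(\<Prod>i\<in>V. M i (p i)) \<noteq> 0"
  shows "\<exists>F s1 s2. F \<in> CM' \<and> s1 permutes V1 - UF F \<and> s2 permutes V2 - UF F \<and> p = build F s1 s2"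
proof -
  define F where "F = Fp p"
  have Fchar: "e \<in> F \<longleftrightarrow> e \<in> E \<and> (\<exists>i\<in>V1. p i \<in> V2 \<and> ends e = {i, p i})" for e
    unfolding F_def Fp_def by auto
  have U: "UF F = {i\<in>V1. p i \<in> V2} \<union> {j\<in>V2. p j \<in> V1}"
  proof
    show "UF F \<subseteq> {i\<in>V1. p i \<in> V2} \<union> {j\<in>V2. p j \<in> V1}"
    proof
      fix x assume "x \<in> UF F"
      then obtain e where e: "e \<in> F" "x \<in> ends e" unfolding UF_def by auto
      then obtain i where "i \<in> V1" "p i \<in> V2" "ends e = {i, p i}" using Fchar by blast
      with e have "x = i \<or> x = p i" "i \<in> V1" "p i \<in> V2" by auto
      then show "x \<in> {i\<in>V1. p i \<in> V2} \<union> {j\<in>V2. p j \<in> V1}" using backa[OF p nz] by auto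
    qed
    show "{i\<in>V1. p i \<in> V2} \<union> {j\<in>V2. p j \<in> V1} \<subseteq> UF F"
    proof
      fix x assume "x \<in> {i\<in>V1. p i \<in> V2} \<union> {j\<in>V2. p j \<in> V1}"
      then obtain i where i: "i \<in> V1" "p i \<in> V2" "x = i \<or> x = p i"
      proof
        assume "x \<in> {i\<in>V1. p i \<in> V2}" then show ?thesis using that by auto
      next
        assume x: "x \<in> {j\<in>V2. p j \<in> V1}"
        then have "p (p x) = x" using back2[OF p nz] by auto
        then show ?thesis using that[of "p x"] x by auto
      qed
      have "p i \<noteq> i" using i disj by auto
      then obtain e where "e \<in> E" "ends e = {i, p i}" using nz_edge[OF p nz] by blast
      then have "e \<in> F" using i Fchar by auto
      then show "x \<in> UF F" using i \<open>ends e = {i, p i}\<close> unfolding UF_def by auto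
    qed
  qed
  have FCM: "F \<in> CM'"
  proof (cases "F = {}")
    case True then show ?thesis unfolding CM'_def by simp
  next
    case False
    have "F \<in> cross_matchings E ends V1 V2"
      unfolding cross_matchings_def
    proof (intro CollectI conjI ballI impI)
      show "F \<subseteq> E" using Fchar by auto
      show "F \<noteq> {}" by (rule False)
      fix e assume e: "e \<in> F"
      then show "\<exists>u v. u \<in> V1 \<and> v \<in> V2 \<and> ends e = {u, v}" using Fchar by auto
      fix f assume f: "f \<in> F" and ef: "e \<noteq> f"
      obtain i where i: "e \<in> E" "i \<in> V1" "p i \<in> V2" "ends e = {i, p i}" using e Fchar by auto
      obtain j where j: "f \<in> E" "j \<in> V1" "p j \<in> V2" "ends f = {j, p j}" using f Fchar by auto
      have "i \<noteq> j" using uniq[OF i(1) j(1)] i j ef by auto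
      moreover have "p i \<noteq> p j" using \<open>i \<noteq> j\<close> permutes_inj[OF p] by (auto simp: inj_eq)
      ultimately show "ends e \<inter> ends f = {}" using i j disj by auto
    qed
    then show ?thesis unfolding CM'_def by simp
  qed
  define s1 where "s1 = (\<lambda>x. if x \<in> V1 - UF F then p x else x)"
  define s2 where "s2 = (\<lambda>x. if x \<in> V2 - UF F then p x else x)"
  have fin12: "finite (V1 - UF F)" "finite (V2 - UF F)" using finV VV by auto
  have s1p: "s1 permutes V1 - UF F" unfolding s1_def
  proof (rule restrict_permutes[OF p fin12(1)])
    fix x assume "x \<in> V1 - UF F"
    then have "x \<in> V1" "p x \<notin> V2" using U by auto
    then show "p x \<in> V1 - UF F" using stay[OF p nz] U disj by auto
  qed
  have s2p: "s2 permutes V2 - UF F" unfolding s2_def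
  proof (rule restrict_permutes[OF p fin12(2)])
    fix x assume "x \<in> V2 - UF F"
    then have "x \<in> V2" "p x \<notin> V1" using U by auto
    then show "p x \<in> V2 - UF F" using mgs.stay[OF swap p nz] U disj by auto
  qed
  note bf = build_facts[OF FCM s1p s2p]
  have dF: "\<forall>e\<in>F. \<forall>f\<in>F. e \<noteq> f \<longrightarrow> ends e \<inter> ends f = {}" using cm_props(5)[OF FCM] by blast
  have "p = build F s1 s2"
  proof
    fix x
    show "p x = build F s1 s2 x"
    proof (cases "x \<in> UF F")
      case True
      then have "(x \<in> V1 \<and> p x \<in> V2) \<or> (x \<in> V2 \<and> p x \<in> V1)" using U by auto
      then have "\<exists>e\<in>F. ends e = {x, p x}"
      proof
        assume x: "x \<in> V1 \<and> p x \<in> V2"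
        then have "p x \<noteq> x" using disj by auto
        then obtain e where "e \<in> E" "ends e = {x, p x}" using nz_edge[OF p nz] by blast
        then show ?thesis using x Fchar by auto
      next
        assume x: "x \<in> V2 \<and> p x \<in> V1"
        then have ppx: "p (p x) = x" using back2[OF p nz] by auto
        have "p (p x) \<noteq> p x" using x disj ppx by auto
        then obtain e where "e \<in> E" "ends e = {p x, p (p x)}" using nz_edge[OF p nz] by blast
        then have e2: "e \<in> E" "ends e = {x, p x}" using ppx by (auto simp: insert_commute)
        have "p x \<in> V1 \<and> p (p x) \<in> V2 \<and> ends e = {p x, p (p x)}" using e2 x ppx by (auto simp: insert_commute)
        then have "e \<in> F" using Fchar e2(1) by blast
        then show ?thesis using e2(2) by auto

      qed
      then obtain e where "e \<in> F" "ends e = {x, p x}" by auto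
      then have "partner ends F x = p x" using partner_eq[OF dF] by auto
      then show ?thesis using bf(1)[OF True] by simp
    next
      case False
      show ?thesis
      proof (cases "x \<in> V")
        case True
        then show ?thesis using False bf(2,3) VV unfolding s1_def s2_def by auto
      next
        case xV: False
        have "build F s1 s2 x = x" using bf(4) xV permutes_not_in by metis
        then show ?thesis using p xV permutes_not_in by metis
      qed
    qed
  qed
  then show ?thesis using FCM s1p s2p by blast
qed

end


context mgs begin

definition "T = (SIGMA F:CM'. {s1. s1 permutes V1 - UF F} \<times> {s2. s2 permutes V2 - UF F})"
definition "bld t = build (fst t) (fst (snd t)) (snd (snd t))"

lemma finCM: "finite CM'"
proof -
  have "CM' \<subseteq> Pow E" unfolding CM'_def cross_matchings_def by auto
  then show ?thesis using finE finite_subset by blast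
qed

lemma main:
  "mg_det n E ends V = (\<Sum>F\<in>CM'. (-1) ^ card F * mg_det n E ends (V1 - UF F) * mg_det n E ends (V2 - UF F))"
proof -
  have finP: "finite {p. p permutes V}" using finV by (rule finite_permutations)
  have sub: "bld ` T \<subseteq> {p. p permutes V}"
    unfolding T_def bld_def using build_facts(4) by auto
  have inj: "inj_on bld T"
  proof (rule inj_onI)
    fix t t' assume t: "t \<in> T" and t': "t' \<in> T" and eq: "bld t = bld t'"
    obtain F s1 s2 where tt: "t = (F, s1, s2)" "F \<in> CM'" "s1 permutes V1 - UF F" "s2 permutes V2 - UF F"
      using t unfolding T_def by auto
    obtain F' s1' s2' where tt': "t' = (F', s1', s2')" "F' \<in> CM'" "s1' permutes V1 - UF F'" "s2' permutes V2 - UF F'"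
      using t' unfolding T_def by auto
    have pe: "build F s1 s2 = build F' s1' s2'" using eq tt tt' unfolding bld_def by simp
    have "F = F'" using build_inv(1)[OF tt(2-4)] build_inv(1)[OF tt'(2-4)] pe by simp
    moreover have "s1 = s1'" "s2 = s2'"
      using build_inv(2,3)[OF tt(2-4)] build_inv(2,3)[OF tt'(2-4)] pe \<open>F = F'\<close> by metis+
    ultimately show "t = t'" using tt tt' by simp
  qed
  have "mg_det n E ends V = (\<Sum>p\<in>{p. p permutes V}. val p)"
    unfolding mg_det_def val_def ..
  also have "\<dots> = (\<Sum>p\<in>bld ` T. val p)"
  proof (rule sum.mono_neutral_right[OF finP sub], rule ballI)
    fix p assume "p \<in> {p. p permutes V} - bld ` T"
    then have p: "p permutes V" and nT: "p \<notin> bld ` T" by auto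
    have "(\<Prod>i\<in>V. M i (p i)) = 0"
    proof (rule ccontr)
      assume "(\<Prod>i\<in>V. M i (p i)) \<noteq> 0"
      then obtain F s1 s2 where "F \<in> CM'" "s1 permutes V1 - UF F" "s2 permutes V2 - UF F" "p = build F s1 s2"
        using surj[OF p] by blast
      then have "p \<in> bld ` T" unfolding T_def bld_def by (auto intro!: image_eqI[of _ _ "(F, s1, s2)"])
      then show False using nT by simp
    qed
    then show "val p = 0" unfolding val_def by simp
  qed
  also have "\<dots> = (\<Sum>t\<in>T. val (bld t))" using sum.reindex[OF inj, of val] by simp
  also have "\<dots> = (\<Sum>F\<in>CM'. \<Sum>s\<in>{s1. s1 permutes V1 - UF F} \<times> {s2. s2 permutes V2 - UF F}.
                     val (build F (fst s) (snd s)))"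
  proof -
    have "(\<Sum>t\<in>T. val (bld t)) = (\<Sum>(F,s)\<in>T. val (build F (fst s) (snd s)))"
      unfolding bld_def by (simp only: split_def)
    also have "\<dots> = (\<Sum>F\<in>CM'. \<Sum>s\<in>{s1. s1 permutes V1 - UF F} \<times> {s2. s2 permutes V2 - UF F}.
                     val (build F (fst s) (snd s)))"
      unfolding T_def
      by (rule sum.Sigma[symmetric]) (use finCM finV VV in \<open>auto intro!: finite_cartesian_product finite_permutations\<close>)
    finally show ?thesis .
  qed
  also have "\<dots> = (\<Sum>F\<in>CM'. (-1) ^ card F * mg_det n E ends (V1 - UF F) * mg_det n E ends (V2 - UF F))"
  proof (rule sum.cong[OF refl])
    fix F assume F: "F \<in> CM'"
    have "(\<Sum>s\<in>{s1. s1 permutes V1 - UF F} \<times> {s2. s2 permutes V2 - UF F}. val (build F (fst s) (snd s)))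
      = (\<Sum>s1\<in>{s1. s1 permutes V1 - UF F}. \<Sum>s2\<in>{s2. s2 permutes V2 - UF F}. val (build F s1 s2))"
      unfolding sum.cartesian_product by (simp only: split_def)
    also have "\<dots> = (\<Sum>s1\<in>{s1. s1 permutes V1 - UF F}. \<Sum>s2\<in>{s2. s2 permutes V2 - UF F}.
        (-1) ^ card F * (of_int (sign s1) * (\<Prod>i\<in>V1 - UF F. M i (s1 i)))
           * (of_int (sign s2) * (\<Prod>i\<in>V2 - UF F. M i (s2 i))))"
      using val_build[OF F] by simp
    also have "\<dots> = (-1) ^ card F * mg_det n E ends (V1 - UF F) * mg_det n E ends (V2 - UF F)"
      unfolding mg_det_def by (simp only: sum_distrib_left sum_distrib_right) (rule sum.swap)
    finally show "(\<Sum>s\<in>{s1. s1 permutes V1 - UF F} \<times> {s2. s2 permutes V2 - UF F}. val (build F (fst s) (snd s)))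
      = (-1) ^ card F * mg_det n E ends (V1 - UF F) * mg_det n E ends (V2 - UF F)" .
  qed
  finally show ?thesis .
qed

end

theorem lemma2p4:
  fixes V V1 V2 :: "'a set" and E :: "'e set" and ends :: "'e \<Rightarrow> 'a set"
    and n :: "'a \<Rightarrow> real"
  assumes "marked_graph V E ends"
    and "V = V1 \<union> V2" and "V1 \<inter> V2 = {}"
    and "h1 E ends V = h1 E ends V1 + h1 E ends V2"
  shows "mg_det n E ends V =
           mg_det n E ends V1 * mg_det n E ends V2
           + (\<Sum>F\<in>cross_matchings E ends V1 V2.
                (-1) ^ card F * mg_det n E ends (V1 - \<Union>(ends ` F))
                               * mg_det n E ends (V2 - \<Union>(ends ` F)))"
proof -
  interpret mgs V V1 V2 E ends n
  proof
    show "marked_graph V E ends" "V = V1 \<union> V2" "V1 \<inter> V2 = {}" using assms by auto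
    fix e u v assume "e \<in> E" "u \<in> V1" "v \<in> V2" "ends e = {u, v}"
    then show "(u, v) \<notin> (adjr ends (E - {e}))\<^sup>*" using no_red[OF assms] by blast
  qed
  have nin: "{} \<notin> cross_matchings E ends V1 V2" unfolding cross_matchings_def by auto
  have fin: "finite (cross_matchings E ends V1 V2)" using finCM unfolding CM'_def by simp
  show ?thesis
    unfolding main CM'_def sum.insert[OF fin nin] UF_def by simp
qed


end
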